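(* Let $L_1,L_2>0$, $\Omega=(0,L_1)\times(0,L_2)$, and $\alpha_1,\alpha_2,\beta_1,\beta_2\in\mathbb{R}$ with $\alpha_1,\alpha_2>0$ and $\alpha_2\beta_1-\alpha_1\beta_2\ne0$. Let $\mathcal{T}\Theta=T_1\Theta_x+T_2\Theta_y$ with $T_1=\begin{pmatrix}\alpha_1&\beta_1\\ \beta_1&-\alpha_1\end{pmatrix}$, $T_2=\begin{pmatrix}\alpha_2&\beta_2\\ \beta_2&-\alpha_2\end{pmatrix}$, on the domain $\mathcal{D}(\mathcal{T})=V$ described in the context. Then $\mathcal{T}$ is positive: $\langle\mathcal{T}\Theta,\Theta\rangle_{L^2(\Omega)^2}\ge0$ for every $\Theta\in\mathcal{D}(\mathcal{T})=V$.
   Context: $\Gamma_W=\{x=0\}$, $\Gamma_E=\{x=L_1\}$, $\Gamma_S=\{y=0\}$, $\Gamma_N=\{y=L_2\}$. $\mathcal{D}(\mathcal{T})=\{\Theta\in L^2(\Omega)^2:\ \mathcal{T}\Theta\in L^2(\Omega)^2,\ \theta_1=0\text{ on }\Gamma_W\cup\Gamma_S,\ \theta_2=0\text{ on }\Gamma_E\cup\Gamma_N\}$ and $V=\{\Theta\in H^1(\Omega)^2:\ \theta_1=0\text{ on }\Gamma_W\cup\Gamma_S,\ \theta_2=0\text{ on }\Gamma_E\cup\Gamma_N\}$; these two spaces coincide under the stated hypotheses. *)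

theory Defs
  imports "HOL-Analysis.Analysis"
begin

definition Omega :: "real \<Rightarrow> real \<Rightarrow> (real \<times> real) set" where
  "Omega L1 L2 = {0<..<L1} \<times> {0<..<L2}"

definition px :: "(real \<times> real \<Rightarrow> real) \<Rightarrow> real \<times> real \<Rightarrow> real" where
  "px \<phi> p = deriv (\<lambda>t. \<phi> (t, snd p)) (fst p)"

definition py :: "(real \<times> real \<Rightarrow> real) \<Rightarrow> real \<times> real \<Rightarrow> real" where
  "py \<phi> p = deriv (\<lambda>t. \<phi> (fst p, t)) (snd p)"

definition C1_fun :: "(real \<times> real \<Rightarrow> real) \<Rightarrow> bool" where
  "C1_fun \<phi> \<longleftrightarrow> continuous_on UNIV \<phi> \<and>
     (\<forall>p. (\<lambda>t. \<phi> (t, snd p)) differentiable (at (fst p)) \<and>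
          (\<lambda>t. \<phi> (fst p, t)) differentiable (at (snd p))) \<and>
     continuous_on UNIV (px \<phi>) \<and> continuous_on UNIV (py \<phi>)"

definition test_fun :: "(real \<times> real) set \<Rightarrow> (real \<times> real \<Rightarrow> real) \<Rightarrow> bool" where
  "test_fun U \<phi> \<longleftrightarrow> C1_fun \<phi> \<and> compact (closure {p. \<phi> p \<noteq> 0}) \<and>
     closure {p. \<phi> p \<noteq> 0} \<subseteq> U"

definition L2_on :: "(real \<times> real) set \<Rightarrow> (real \<times> real \<Rightarrow> real) \<Rightarrow> bool" where
  "L2_on U f \<longleftrightarrow> set_borel_measurable lborel U f \<and>
     set_integrable lborel U (\<lambda>p. (f p)\<^sup>2)"

definition weak_dx :: "(real \<times> real) set \<Rightarrow> (real \<times> real \<Rightarrow> real) \<Rightarrow> (real \<times> real \<Rightarrow> real) \<Rightarrow> bool" where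
  "weak_dx U f g \<longleftrightarrow> (\<forall>\<phi>. test_fun U \<phi> \<longrightarrow>
     (LINT p:U|lborel. f p * px \<phi> p) = - (LINT p:U|lborel. g p * \<phi> p))"

definition weak_dy :: "(real \<times> real) set \<Rightarrow> (real \<times> real \<Rightarrow> real) \<Rightarrow> (real \<times> real \<Rightarrow> real) \<Rightarrow> bool" where
  "weak_dy U f g \<longleftrightarrow> (\<forall>\<phi>. test_fun U \<phi> \<longrightarrow>
     (LINT p:U|lborel. f p * py \<phi> p) = - (LINT p:U|lborel. g p * \<phi> p))"

definition H1_dist :: "(real \<times> real) set \<Rightarrow> (real \<times> real \<Rightarrow> real) \<Rightarrow> (real \<times> real \<Rightarrow> real)
    \<Rightarrow> (real \<times> real \<Rightarrow> real) \<Rightarrow> (real \<times> real \<Rightarrow> real) \<Rightarrow> real" where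
  "H1_dist U f gx gy \<phi> = (LINT p:U|lborel. (f p - \<phi> p)\<^sup>2) + (LINT p:U|lborel. (gx p - px \<phi> p)\<^sup>2)
      + (LINT p:U|lborel. (gy p - py \<phi> p)\<^sup>2)"

text \<open>Vanishing trace on a boundary segment parametrised by arclength \<gamma> on [a,b]:
  trace f is the L^2 limit of the boundary values of C^1 functions converging to f in H^1.\<close>
definition zero_trace :: "(real \<times> real) set \<Rightarrow> (real \<times> real \<Rightarrow> real) \<Rightarrow> (real \<times> real \<Rightarrow> real)
    \<Rightarrow> (real \<times> real \<Rightarrow> real) \<Rightarrow> (real \<Rightarrow> real \<times> real) \<Rightarrow> real \<Rightarrow> real \<Rightarrow> bool" where
  "zero_trace U f gx gy \<gamma> a b \<longleftrightarrow> (\<exists>\<phi>s :: nat \<Rightarrow> real \<times> real \<Rightarrow> real.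
     (\<forall>n. C1_fun (\<phi>s n)) \<and>
     (\<lambda>n. H1_dist U f gx gy (\<phi>s n)) \<longlonglongrightarrow> 0 \<and>
     (\<lambda>n. integral {a..b} (\<lambda>s. (\<phi>s n (\<gamma> s))\<^sup>2)) \<longlonglongrightarrow> 0)"

end

theory Submission
  imports Defs
begin



lemma cs_int:
  fixes h k :: "'a \<Rightarrow> real"
  assumes [measurable]: "h \<in> borel_measurable M" "k \<in> borel_measurable M"
    and ih: "integrable M (\<lambda>x. (h x)^2)" and ik: "integrable M (\<lambda>x. (k x)^2)"
  shows "integrable M (\<lambda>x. h x * k x)"
proof (rule Bochner_Integration.integrable_bound[where f="\<lambda>x. (h x)^2 + (k x)^2"])
  show "integrable M (\<lambda>x. (h x)^2 + (k x)^2)" using ih ik by simp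
  show "AE x in M. norm (h x * k x) \<le> norm ((h x)^2 + (k x)^2)"
  proof (rule AE_I2)
    fix x
    have "0 \<le> (\<bar>h x\<bar> - \<bar>k x\<bar>)^2" by simp
    then have "2 * (\<bar>h x\<bar> * \<bar>k x\<bar>) \<le> (h x)^2 + (k x)^2"
      unfolding power2_diff by simp
    moreover have "0 \<le> \<bar>h x\<bar> * \<bar>k x\<bar>" by simp
    ultimately have "\<bar>h x * k x\<bar> \<le> (h x)^2 + (k x)^2"
      unfolding abs_mult by linarith
    then show "norm (h x * k x) \<le> norm ((h x)^2 + (k x)^2)" by simp
  qed
qed measurable

lemma discr:
  fixes A B C :: real
  assumes "A \<ge> 0" "\<And>t. 0 \<le> A*t^2 + 2*C*t + B"
  shows "C^2 \<le> A*B"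
proof (cases "A = 0")
  case True
  show ?thesis
  proof (rule ccontr)
    assume "\<not> ?thesis"
    then have "C \<noteq> 0" using True by auto
    have "0 \<le> A*(-(B+1)/(2*C))^2 + 2*C*(-(B+1)/(2*C)) + B" by (rule assms(2))
    with True \<open>C \<noteq> 0\<close> show False by (simp add: field_simps)
  qed
next
  case False
  then have "A > 0" using assms(1) by simp
  have "0 \<le> A*(-C/A)^2 + 2*C*(-C/A) + B" by (rule assms(2))
  with \<open>A > 0\<close> show ?thesis by (simp add: field_simps power2_eq_square)
qed

lemma cs_ineq:
  fixes h k :: "'a \<Rightarrow> real"
  assumes [measurable]: "h \<in> borel_measurable M" "k \<in> borel_measurable M"
    and ih: "integrable M (\<lambda>x. (h x)^2)" and ik: "integrable M (\<lambda>x. (k x)^2)"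
  shows "(\<integral>x. h x * k x \<partial>M)^2 \<le> (\<integral>x. (h x)^2 \<partial>M) * (\<integral>x. (k x)^2 \<partial>M)"
proof (rule discr)
  show "0 \<le> (\<integral>x. (h x)^2 \<partial>M)" by simp
  have ihk: "integrable M (\<lambda>x. h x * k x)" by (rule cs_int) fact+
  fix t :: real
  have "(\<integral>x. (t * h x + k x)^2 \<partial>M) = (\<integral>x. t^2 * (h x)^2 + 2 * t * (h x * k x) + (k x)^2 \<partial>M)"
    by (rule Bochner_Integration.integral_cong) (auto simp: power2_eq_square algebra_simps)
  also have "\<dots> = t^2 * (\<integral>x. (h x)^2 \<partial>M) + 2 * t * (\<integral>x. h x * k x \<partial>M) + (\<integral>x. (k x)^2 \<partial>M)"
    using ih ik ihk by simp
  finally have "(\<integral>x. (t * h x + k x)^2 \<partial>M) = (\<integral>x. (h x)^2 \<partial>M) * t^2 + 2 * (\<integral>x. h x * k x \<partial>M) * t + (\<integral>x. (k x)^2 \<partial>M)"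
    by (simp add: mult.commute)
  moreover have "0 \<le> (\<integral>x. (t * h x + k x)^2 \<partial>M)" by simp
  ultimately show "0 \<le> (\<integral>x. (h x)^2 \<partial>M) * t^2 + 2 * (\<integral>x. h x * k x \<partial>M) * t + (\<integral>x. (k x)^2 \<partial>M)"
    by simp
qed



lemma sq_diff_int:
  fixes h k :: "'a \<Rightarrow> real"
  assumes [measurable]: "h \<in> borel_measurable M" "k \<in> borel_measurable M"
    and ih: "integrable M (\<lambda>x. (h x)^2)" and ik: "integrable M (\<lambda>x. (k x)^2)"
  shows "integrable M (\<lambda>x. (h x - k x)^2)"
proof -
  have "integrable M (\<lambda>x. h x * k x)" by (rule cs_int) fact+
  then have "integrable M (\<lambda>x. (h x)^2 + (k x)^2 - 2 * (h x * k x))"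
    using ih ik by simp
  then show ?thesis by (simp add: power2_diff mult.assoc)
qed

lemma sq_tendsto_zero:
  fixes x y :: "nat \<Rightarrow> real"
  assumes "\<And>n. (x n)^2 \<le> y n" "y \<longlonglongrightarrow> 0"
  shows "x \<longlonglongrightarrow> 0"
proof (rule Lim_null_comparison[where g="\<lambda>n. sqrt (y n)"])
  show "\<forall>\<^sub>F n in sequentially. norm (x n) \<le> sqrt (y n)"
    using assms(1) by (auto intro!: always_eventually real_le_rsqrt)
  show "(\<lambda>n. sqrt (y n)) \<longlonglongrightarrow> 0"
    using tendsto_real_sqrt[OF assms(2)] by simp
qed

lemma L2_prod_tendsto:
  fixes fn gn :: "nat \<Rightarrow> 'a \<Rightarrow> real" and f g :: "'a \<Rightarrow> real"
  assumes mf[measurable]: "\<And>n. fn n \<in> borel_measurable M" "f \<in> borel_measurable M"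
    and mg[measurable]: "\<And>n. gn n \<in> borel_measurable M" "g \<in> borel_measurable M"
    and ifn: "\<And>n. integrable M (\<lambda>x. (fn n x)^2)" and iff: "integrable M (\<lambda>x. (f x)^2)"
    and ign: "\<And>n. integrable M (\<lambda>x. (gn n x)^2)" and ig: "integrable M (\<lambda>x. (g x)^2)"
    and cf: "(\<lambda>n. \<integral>x. (fn n x - f x)^2 \<partial>M) \<longlonglongrightarrow> 0"
    and cg: "(\<lambda>n. \<integral>x. (gn n x - g x)^2 \<partial>M) \<longlonglongrightarrow> 0"
  shows "(\<lambda>n. \<integral>x. fn n x * gn n x \<partial>M) \<longlonglongrightarrow> (\<integral>x. f x * g x \<partial>M)"
proof -
  define a where "a n x = fn n x - f x" for n x
  define b where "b n x = gn n x - g x" for n x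
  have ma[measurable]: "a n \<in> borel_measurable M" for n unfolding a_def by measurable
  have mb[measurable]: "b n \<in> borel_measurable M" for n unfolding b_def by measurable
  have ia: "integrable M (\<lambda>x. (a n x)^2)" for n unfolding a_def by (rule sq_diff_int) (use ifn iff in auto)
  have ib: "integrable M (\<lambda>x. (b n x)^2)" for n unfolding b_def by (rule sq_diff_int) (use ign ig in auto)
  have i1: "integrable M (\<lambda>x. a n x * b n x)" for n by (rule cs_int) (use ia ib in auto)
  have i2: "integrable M (\<lambda>x. a n x * g x)" for n by (rule cs_int) (use ia ig in auto)
  have i3: "integrable M (\<lambda>x. f x * b n x)" for n by (rule cs_int) (use iff ib in auto)
  have i4: "integrable M (\<lambda>x. f x * g x)" by (rule cs_int) (use iff ig in auto)
  have eq: "(\<integral>x. fn n x * gn n x \<partial>M) =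
      (\<integral>x. a n x * b n x \<partial>M) + (\<integral>x. a n x * g x \<partial>M) + (\<integral>x. f x * b n x \<partial>M) + (\<integral>x. f x * g x \<partial>M)" for n
  proof -
    have "(\<integral>x. fn n x * gn n x \<partial>M) = (\<integral>x. a n x * b n x + a n x * g x + f x * b n x + f x * g x \<partial>M)"
      by (rule Bochner_Integration.integral_cong) (auto simp: a_def b_def algebra_simps)
    also have "\<dots> = (\<integral>x. a n x * b n x \<partial>M) + (\<integral>x. a n x * g x \<partial>M) + (\<integral>x. f x * b n x \<partial>M) + (\<integral>x. f x * g x \<partial>M)"
      using i1[of n] i2[of n] i3[of n] i4 by simp
    finally show ?thesis .
  qed
  have ca: "(\<lambda>n. \<integral>x. (a n x)^2 \<partial>M) \<longlonglongrightarrow> 0" using cf unfolding a_def .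
  have cb: "(\<lambda>n. \<integral>x. (b n x)^2 \<partial>M) \<longlonglongrightarrow> 0" using cg unfolding b_def .
  have t1: "(\<lambda>n. \<integral>x. a n x * b n x \<partial>M) \<longlonglongrightarrow> 0"
    by (rule sq_tendsto_zero[OF cs_ineq[OF ma mb ia ib]]) (use tendsto_mult[OF ca cb] in simp)
  have t2: "(\<lambda>n. \<integral>x. a n x * g x \<partial>M) \<longlonglongrightarrow> 0"
    by (rule sq_tendsto_zero[OF cs_ineq[OF ma mg(2) ia ig]]) (use tendsto_mult[OF ca tendsto_const] in simp)
  have t3: "(\<lambda>n. \<integral>x. f x * b n x \<partial>M) \<longlonglongrightarrow> 0"
    by (rule sq_tendsto_zero[OF cs_ineq[OF mf(2) mb iff ib]]) (use tendsto_mult[OF tendsto_const cb] in simp)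
  have "(\<lambda>n. (\<integral>x. a n x * b n x \<partial>M) + (\<integral>x. a n x * g x \<partial>M) + (\<integral>x. f x * b n x \<partial>M) + (\<integral>x. f x * g x \<partial>M))
     \<longlonglongrightarrow> 0 + 0 + 0 + (\<integral>x. f x * g x \<partial>M)"
    by (intro tendsto_add t1 t2 t3 tendsto_const)
  then show ?thesis unfolding eq by simp
qed

lemma lin4:
  fixes p1 p2 p3 p4 :: "'a \<Rightarrow> real"
  assumes "integrable M p1" "integrable M p2" "integrable M p3" "integrable M p4"
  shows "(\<integral>x. a * p1 x + b * p2 x + b * p3 x - a * p4 x \<partial>M) =
     a * (\<integral>x. p1 x \<partial>M) + b * (\<integral>x. p2 x \<partial>M) + b * (\<integral>x. p3 x \<partial>M) - a * (\<integral>x. p4 x \<partial>M)"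
  using assms by simp



lemma quad:
  fixes \<alpha> \<beta> u v :: real
  assumes "\<alpha> > 0"
  shows "-(\<beta>^2/(2 * \<alpha>) + \<alpha>/2) * (v * v) \<le> \<alpha>/2 * (u * u) + \<beta> * (u * v) - \<alpha>/2 * (v * v)"
proof -
  have h: "\<alpha>/2 * (u + \<beta> * v/\<alpha>)^2 = \<alpha>/2 * (u * u) + \<beta> * (u * v) + \<beta>^2/(2 * \<alpha>) * (v * v)"
    using assms by (simp add: field_simps power2_eq_square)
  have "0 \<le> \<alpha>/2 * (u + \<beta> * v/\<alpha>)^2" using assms by simp
  then show ?thesis unfolding h by (simp add: algebra_simps)
qed

lemma C1_dx: "C1_fun u \<Longrightarrow> ((\<lambda>t. u (t, y)) has_real_derivative px u (x, y)) (at x)"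
  unfolding C1_fun_def px_def
  by (metis DERIV_deriv_iff_real_differentiable fst_conv snd_conv)

lemma C1_dy: "C1_fun u \<Longrightarrow> ((\<lambda>t. u (x, t)) has_real_derivative py u (x, y)) (at y)"
  unfolding C1_fun_def py_def
  by (metis DERIV_deriv_iff_real_differentiable fst_conv snd_conv)

lemma C1_cont: "C1_fun u \<Longrightarrow> continuous_on UNIV u" "C1_fun u \<Longrightarrow> continuous_on UNIV (px u)"
  "C1_fun u \<Longrightarrow> continuous_on UNIV (py u)"
  unfolding C1_fun_def by auto

lemma Omega_box: "Omega L1 L2 = box (0,0) (L1,L2)"
  by (auto simp: Omega_def mem_box Basis_prod_def)

lemma Omega_sets[measurable, simp]: "Omega L1 L2 \<in> sets borel"
  unfolding Omega_box by (simp add: borel_open)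

lemma Omega_sets'[measurable, simp]: "Omega L1 L2 \<in> sets lborel"
  by simp

lemma Omega_sub: "Omega L1 L2 \<subseteq> cbox (0,0) (L1,L2)"
  unfolding Omega_box by (rule box_subset_cbox)

lemma set_to_M:
  "set_lebesgue_integral lborel (Omega L1 L2) f = integral\<^sup>L (restrict_space lborel (Omega L1 L2)) (f :: _ \<Rightarrow> real)"
  unfolding set_lebesgue_integral_def by (subst integral_restrict_space) auto

lemma setint_to_M:
  "set_integrable lborel (Omega L1 L2) f \<longleftrightarrow> integrable (restrict_space lborel (Omega L1 L2)) (f :: _ \<Rightarrow> real)"
  unfolding set_integrable_def by (subst integrable_restrict_space) auto

lemma setmeas_to_M:
  "set_borel_measurable lborel (Omega L1 L2) f \<longleftrightarrow> (f :: _ \<Rightarrow> real) \<in> borel_measurable (restrict_space lborel (Omega L1 L2))"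
  unfolding set_borel_measurable_def by (subst borel_measurable_restrict_space_iff) auto

lemma L2_on_M:
  assumes "L2_on (Omega L1 L2) f"
  shows "f \<in> borel_measurable (restrict_space lborel (Omega L1 L2))"
    "integrable (restrict_space lborel (Omega L1 L2)) (\<lambda>p. (f p)^2)"
  using assms unfolding L2_on_def setmeas_to_M setint_to_M by auto

lemma cont_M:
  fixes E :: "real \<times> real \<Rightarrow> real"
  assumes "continuous_on UNIV E"
  shows "E \<in> borel_measurable (restrict_space lborel (Omega L1 L2))"
    "integrable (restrict_space lborel (Omega L1 L2)) E"
    "integral\<^sup>L (restrict_space lborel (Omega L1 L2)) E = integral (cbox (0,0) (L1,L2)) E"
proof -
  have "E \<in> borel_measurable borel" using assms by (rule borel_measurable_continuous_onI)
  then have "E \<in> borel_measurable lborel" by simp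
  then show "E \<in> borel_measurable (restrict_space lborel (Omega L1 L2))"
    by (rule measurable_restrict_space1)
  have "set_integrable lborel (cbox (0,0) (L1,L2)) E"
    unfolding set_integrable_def
    by (rule borel_integrable_compact) (auto intro: continuous_on_subset[OF assms])
  then have si: "set_integrable lborel (Omega L1 L2) E"
    by (rule set_integrable_subset) (auto simp: Omega_sub)
  then show "integrable (restrict_space lborel (Omega L1 L2)) E" unfolding setint_to_M .
  have "integral\<^sup>L (restrict_space lborel (Omega L1 L2)) E = set_lebesgue_integral lborel (Omega L1 L2) E"
    by (simp add: set_to_M)
  also have "\<dots> = integral (Omega L1 L2) E" by (rule set_borel_integral_eq_integral[OF si])
  also have "\<dots> = integral (cbox (0,0) (L1,L2)) E" unfolding Omega_box by (rule integral_open_interval)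
  finally show "integral\<^sup>L (restrict_space lborel (Omega L1 L2)) E = integral (cbox (0,0) (L1,L2)) E" .
qed

lemma C1_M:
  assumes "C1_fun u"
  shows "u \<in> borel_measurable (restrict_space lborel (Omega L1 L2))"
    "integrable (restrict_space lborel (Omega L1 L2)) (\<lambda>p. (u p)^2)"
    "px u \<in> borel_measurable (restrict_space lborel (Omega L1 L2))"
    "integrable (restrict_space lborel (Omega L1 L2)) (\<lambda>p. (px u p)^2)"
    "py u \<in> borel_measurable (restrict_space lborel (Omega L1 L2))"
    "integrable (restrict_space lborel (Omega L1 L2)) (\<lambda>p. (py u p)^2)"
  using C1_cont[OF assms]
  by (auto intro!: cont_M continuous_intros)



lemma comp_cont:
  fixes u :: "real \<times> real \<Rightarrow> real"
  assumes "continuous_on UNIV u" "continuous_on S f"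
  shows "continuous_on S (\<lambda>y. u (f y))"
  using continuous_on_compose2[OF assms(1) assms(2)] by simp

lemma green_x:
  fixes u v :: "real \<times> real \<Rightarrow> real" and \<alpha> \<beta> L1 L2 :: real
  assumes "L1 > 0" "L2 > 0" "\<alpha> > 0" "C1_fun u" "C1_fun v"
  shows "-(\<beta>^2/(2 * \<alpha>) + \<alpha>/2) * (integral {0..L2} (\<lambda>s. (v (L1, s))^2) + integral {0..L2} (\<lambda>s. (u (0, s))^2))
     \<le> integral\<^sup>L (restrict_space lborel (Omega L1 L2))
        (\<lambda>p. \<alpha> * px u p * u p + \<beta> * px v p * u p + \<beta> * px u p * v p - \<alpha> * px v p * v p)"
proof -
  define K where "K = \<beta>^2/(2 * \<alpha>) + \<alpha>/2"
  define E where "E = (\<lambda>p. \<alpha> * px u p * u p + \<beta> * px v p * u p + \<beta> * px u p * v p - \<alpha> * px v p * v p)"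
  define G where "G = (\<lambda>p. \<alpha>/2 * (u p * u p) + \<beta> * (u p * v p) - \<alpha>/2 * (v p * v p))"
  note cu = C1_cont[OF assms(4)] and cv = C1_cont[OF assms(5)]
  have cE: "continuous_on UNIV E" unfolding E_def using cu cv by (intro continuous_intros) auto
  have cG: "continuous_on UNIV G" unfolding G_def using cu cv by (intro continuous_intros) auto
  have cE': "continuous_on (cbox (0,0) (L1,L2)) (\<lambda>(x,y). E (x,y))"
    using continuous_on_subset[OF cE] by simp
  have "integral\<^sup>L (restrict_space lborel (Omega L1 L2)) E = integral (cbox (0,0) (L1,L2)) E"
    by (rule cont_M(3)[OF cE])
  also have "\<dots> = integral (cbox 0 L1) (\<lambda>x. integral (cbox 0 L2) (\<lambda>y. E (x, y)))"
    by (rule integral_prod_continuous) (rule continuous_on_subset[OF cE], simp)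
  also have "\<dots> = integral (cbox 0 L2) (\<lambda>y. integral (cbox 0 L1) (\<lambda>x. E (x, y)))"
    using integral_swap_continuous[of 0 0 L1 L2 "\<lambda>x y. E (x,y)", OF cE'] by simp
  also have "\<dots> = integral {0..L2} (\<lambda>y. G (L1, y) - G (0, y))"
  proof -
    have "integral {0..L1} (\<lambda>x. E (x, y)) = G (L1, y) - G (0, y)" for y
    proof -
      have d: "((\<lambda>t. G (t, y)) has_real_derivative E (t, y)) (at t)" for t
        unfolding G_def E_def
        by (auto intro!: derivative_eq_intros C1_dx[OF assms(4)] C1_dx[OF assms(5)] simp: algebra_simps)
      have "((\<lambda>x. E (x, y)) has_integral ((\<lambda>x. G (x, y)) L1 - (\<lambda>x. G (x, y)) 0)) {0..L1}"
        by (rule fundamental_theorem_of_calculus)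
          (use assms(1) d in \<open>auto simp: has_real_derivative_iff_has_vector_derivative intro: has_vector_derivative_at_within\<close>)
      then show ?thesis by (simp add: integral_unique)
    qed
    then show ?thesis by simp
  qed
  also have "\<dots> \<ge> integral {0..L2} (\<lambda>y. -K * ((v (L1, y))^2 + (u (0, y))^2))"
  proof (rule integral_le)
    show "(\<lambda>y. -K * ((v (L1, y))^2 + (u (0, y))^2)) integrable_on {0..L2}"
      by (rule integrable_continuous_interval)
        (intro continuous_intros comp_cont[OF cu(1)] comp_cont[OF cv(1)])
    show "(\<lambda>y. G (L1, y) - G (0, y)) integrable_on {0..L2}"
      by (rule integrable_continuous_interval)
        (intro continuous_intros comp_cont[OF cG])
    fix y
    have q1: "-K * (v (L1,y) * v (L1,y)) \<le> G (L1, y)"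
      unfolding K_def G_def by (rule quad[OF assms(3)])
    have q2: "-K * (u (0,y) * u (0,y)) \<le> \<alpha>/2 * (v (0,y) * v (0,y)) + (-\<beta>) * (v (0,y) * u (0,y)) - \<alpha>/2 * (u (0,y) * u (0,y))"
      unfolding K_def using quad[OF assms(3), of "-\<beta>" "u (0,y)" "v (0,y)"] by simp
    show "-K * ((v (L1, y))^2 + (u (0, y))^2) \<le> G (L1, y) - G (0, y)"
      using q1 q2 unfolding G_def by (simp add: power2_eq_square algebra_simps)
  qed
  also have "integral {0..L2} (\<lambda>y. -K * ((v (L1, y))^2 + (u (0, y))^2))
      = -K * (integral {0..L2} (\<lambda>s. (v (L1, s))^2) + integral {0..L2} (\<lambda>s. (u (0, s))^2))"
  proof -
    have "(\<lambda>s. (v (L1, s))^2) integrable_on {0..L2}" "(\<lambda>s. (u (0, s))^2) integrable_on {0..L2}"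
      by (rule integrable_continuous_interval, intro continuous_intros comp_cont[OF cu(1)] comp_cont[OF cv(1)])+
    then show ?thesis by (simp add: integral_add)
  qed
  finally show ?thesis unfolding K_def E_def .
qed

lemma green_y:
  fixes u v :: "real \<times> real \<Rightarrow> real" and \<alpha> \<beta> L1 L2 :: real
  assumes "L1 > 0" "L2 > 0" "\<alpha> > 0" "C1_fun u" "C1_fun v"
  shows "-(\<beta>^2/(2 * \<alpha>) + \<alpha>/2) * (integral {0..L1} (\<lambda>s. (v (s, L2))^2) + integral {0..L1} (\<lambda>s. (u (s, 0))^2))
     \<le> integral\<^sup>L (restrict_space lborel (Omega L1 L2))
        (\<lambda>p. \<alpha> * py u p * u p + \<beta> * py v p * u p + \<beta> * py u p * v p - \<alpha> * py v p * v p)"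
proof -
  define K where "K = \<beta>^2/(2 * \<alpha>) + \<alpha>/2"
  define E where "E = (\<lambda>p. \<alpha> * py u p * u p + \<beta> * py v p * u p + \<beta> * py u p * v p - \<alpha> * py v p * v p)"
  define G where "G = (\<lambda>p. \<alpha>/2 * (u p * u p) + \<beta> * (u p * v p) - \<alpha>/2 * (v p * v p))"
  note cu = C1_cont[OF assms(4)] and cv = C1_cont[OF assms(5)]
  have cE: "continuous_on UNIV E" unfolding E_def using cu cv by (intro continuous_intros) auto
  have cG: "continuous_on UNIV G" unfolding G_def using cu cv by (intro continuous_intros) auto
  have "integral\<^sup>L (restrict_space lborel (Omega L1 L2)) E = integral (cbox (0,0) (L1,L2)) E"
    by (rule cont_M(3)[OF cE])
  also have "\<dots> = integral (cbox 0 L1) (\<lambda>x. integral (cbox 0 L2) (\<lambda>y. E (x, y)))"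
    by (rule integral_prod_continuous) (rule continuous_on_subset[OF cE], simp)
  also have "\<dots> = integral {0..L1} (\<lambda>x. G (x, L2) - G (x, 0))"
  proof -
    have "integral {0..L2} (\<lambda>y. E (x, y)) = G (x, L2) - G (x, 0)" for x
    proof -
      have d: "((\<lambda>t. G (x, t)) has_real_derivative E (x, t)) (at t)" for t
        unfolding G_def E_def
        by (auto intro!: derivative_eq_intros C1_dy[OF assms(4)] C1_dy[OF assms(5)] simp: algebra_simps)
      have "((\<lambda>y. E (x, y)) has_integral ((\<lambda>y. G (x, y)) L2 - (\<lambda>y. G (x, y)) 0)) {0..L2}"
        by (rule fundamental_theorem_of_calculus)
          (use assms(2) d in \<open>auto simp: has_real_derivative_iff_has_vector_derivative intro: has_vector_derivative_at_within\<close>)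
      then show ?thesis by (simp add: integral_unique)
    qed
    then show ?thesis by simp
  qed
  also have "\<dots> \<ge> integral {0..L1} (\<lambda>x. -K * ((v (x, L2))^2 + (u (x, 0))^2))"
  proof (rule integral_le)
    show "(\<lambda>x. -K * ((v (x, L2))^2 + (u (x, 0))^2)) integrable_on {0..L1}"
      by (rule integrable_continuous_interval)
        (intro continuous_intros comp_cont[OF cu(1)] comp_cont[OF cv(1)])
    show "(\<lambda>x. G (x, L2) - G (x, 0)) integrable_on {0..L1}"
      by (rule integrable_continuous_interval)
        (intro continuous_intros comp_cont[OF cG])
    fix x
    have q1: "-K * (v (x,L2) * v (x,L2)) \<le> G (x, L2)"
      unfolding K_def G_def by (rule quad[OF assms(3)])
    have q2: "-K * (u (x,0) * u (x,0)) \<le> \<alpha>/2 * (v (x,0) * v (x,0)) + (-\<beta>) * (v (x,0) * u (x,0)) - \<alpha>/2 * (u (x,0) * u (x,0))"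
      unfolding K_def using quad[OF assms(3), of "-\<beta>" "u (x,0)" "v (x,0)"] by simp
    show "-K * ((v (x, L2))^2 + (u (x, 0))^2) \<le> G (x, L2) - G (x, 0)"
      using q1 q2 unfolding G_def by (simp add: power2_eq_square algebra_simps)
  qed
  also have "integral {0..L1} (\<lambda>x. -K * ((v (x, L2))^2 + (u (x, 0))^2))
      = -K * (integral {0..L1} (\<lambda>s. (v (s, L2))^2) + integral {0..L1} (\<lambda>s. (u (s, 0))^2))"
  proof -
    have "(\<lambda>s. (v (s, L2))^2) integrable_on {0..L1}" "(\<lambda>s. (u (s, 0))^2) integrable_on {0..L1}"
      by (rule integrable_continuous_interval, intro continuous_intros comp_cont[OF cu(1)] comp_cont[OF cv(1)])+
    then show ?thesis by (simp add: integral_add)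
  qed
  finally show ?thesis unfolding K_def E_def .
qed



definition L2conv :: "'a measure \<Rightarrow> (nat \<Rightarrow> 'a \<Rightarrow> real) \<Rightarrow> ('a \<Rightarrow> real) \<Rightarrow> bool" where
  "L2conv M fn f \<longleftrightarrow> (\<forall>n. fn n \<in> borel_measurable M) \<and> f \<in> borel_measurable M \<and>
     (\<forall>n. integrable M (\<lambda>x. (fn n x)^2)) \<and> integrable M (\<lambda>x. (f x)^2) \<and>
     (\<lambda>n. \<integral>x. (fn n x - f x)^2 \<partial>M) \<longlonglongrightarrow> 0"

lemma L2conv_prod:
  assumes "L2conv M fn f" "L2conv M gn g"
  shows "(\<lambda>n. \<integral>x. gn n x * fn n x \<partial>M) \<longlonglongrightarrow> (\<integral>x. g x * f x \<partial>M)"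
  using assms unfolding L2conv_def by (intro L2_prod_tendsto) auto

lemma L2conv_int:
  assumes "L2conv M fn f" "L2conv M gn g"
  shows "integrable M (\<lambda>x. g x * f x)" "integrable M (\<lambda>x. gn n x * fn n x)"
  using assms unfolding L2conv_def by (auto intro!: cs_int)

lemma Q_eq:
  fixes f g h k :: "'a \<Rightarrow> real"
  assumes "integrable M (\<lambda>x. g x * f x)" "integrable M (\<lambda>x. k x * f x)"
    "integrable M (\<lambda>x. g x * h x)" "integrable M (\<lambda>x. k x * h x)"
  shows "(\<integral>x. \<alpha> * g x * f x + \<beta> * k x * f x + \<beta> * g x * h x - \<alpha> * k x * h x \<partial>M) =
    \<alpha> * (\<integral>x. g x * f x \<partial>M) + \<beta> * (\<integral>x. k x * f x \<partial>M) + \<beta> * (\<integral>x. g x * h x \<partial>M) - \<alpha> * (\<integral>x. k x * h x \<partial>M)"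
    "integrable M (\<lambda>x. \<alpha> * g x * f x + \<beta> * k x * f x + \<beta> * g x * h x - \<alpha> * k x * h x)"
proof -
  have "(\<integral>x. \<alpha> * g x * f x + \<beta> * k x * f x + \<beta> * g x * h x - \<alpha> * k x * h x \<partial>M) =
     (\<integral>x. \<alpha> * (g x * f x) + \<beta> * (k x * f x) + \<beta> * (g x * h x) - \<alpha> * (k x * h x) \<partial>M)"
    by (simp add: mult.assoc)
  also have "\<dots> = \<alpha> * (\<integral>x. g x * f x \<partial>M) + \<beta> * (\<integral>x. k x * f x \<partial>M) + \<beta> * (\<integral>x. g x * h x \<partial>M) - \<alpha> * (\<integral>x. k x * h x \<partial>M)"
    by (rule lin4) fact+
  finally show "(\<integral>x. \<alpha> * g x * f x + \<beta> * k x * f x + \<beta> * g x * h x - \<alpha> * k x * h x \<partial>M) =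
    \<alpha> * (\<integral>x. g x * f x \<partial>M) + \<beta> * (\<integral>x. k x * f x \<partial>M) + \<beta> * (\<integral>x. g x * h x \<partial>M) - \<alpha> * (\<integral>x. k x * h x \<partial>M)" .
  have "integrable M (\<lambda>x. \<alpha> * (g x * f x) + \<beta> * (k x * f x) + \<beta> * (g x * h x) - \<alpha> * (k x * h x))"
    using assms by simp
  then show "integrable M (\<lambda>x. \<alpha> * g x * f x + \<beta> * k x * f x + \<beta> * g x * h x - \<alpha> * k x * h x)"
    by (simp add: mult.assoc)
qed

lemma Q_tendsto:
  assumes F: "L2conv M fn f" and G: "L2conv M gn g" and H: "L2conv M hn h" and K: "L2conv M kn k"
  shows "(\<lambda>n. \<integral>x. \<alpha> * gn n x * fn n x + \<beta> * kn n x * fn n x + \<beta> * gn n x * hn n x - \<alpha> * kn n x * hn n x \<partial>M)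
     \<longlonglongrightarrow> (\<integral>x. \<alpha> * g x * f x + \<beta> * k x * f x + \<beta> * g x * h x - \<alpha> * k x * h x \<partial>M)"
proof -
  have e1: "(\<integral>x. \<alpha> * g x * f x + \<beta> * k x * f x + \<beta> * g x * h x - \<alpha> * k x * h x \<partial>M) =
    \<alpha> * (\<integral>x. g x * f x \<partial>M) + \<beta> * (\<integral>x. k x * f x \<partial>M) + \<beta> * (\<integral>x. g x * h x \<partial>M) - \<alpha> * (\<integral>x. k x * h x \<partial>M)"
    by (rule Q_eq(1)) (use L2conv_int[OF F G] L2conv_int[OF F K] L2conv_int[OF H G] L2conv_int[OF H K] in auto)
  have e2: "(\<integral>x. \<alpha> * gn n x * fn n x + \<beta> * kn n x * fn n x + \<beta> * gn n x * hn n x - \<alpha> * kn n x * hn n x \<partial>M) =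
    \<alpha> * (\<integral>x. gn n x * fn n x \<partial>M) + \<beta> * (\<integral>x. kn n x * fn n x \<partial>M) + \<beta> * (\<integral>x. gn n x * hn n x \<partial>M) - \<alpha> * (\<integral>x. kn n x * hn n x \<partial>M)" for n
    by (rule Q_eq(1)) (use L2conv_int[OF F G] L2conv_int[OF F K] L2conv_int[OF H G] L2conv_int[OF H K] in auto)
  show ?thesis unfolding e1 e2
    by (intro tendsto_intros L2conv_prod F G H K)
qed

lemma H1_split:
  assumes "(\<lambda>n. H1_dist (Omega L1 L2) f gx gy (\<phi> n)) \<longlonglongrightarrow> 0"
  shows "(\<lambda>n. \<integral>p. (\<phi> n p - f p)^2 \<partial>restrict_space lborel (Omega L1 L2)) \<longlonglongrightarrow> 0"
    "(\<lambda>n. \<integral>p. (px (\<phi> n) p - gx p)^2 \<partial>restrict_space lborel (Omega L1 L2)) \<longlonglongrightarrow> 0"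
    "(\<lambda>n. \<integral>p. (py (\<phi> n) p - gy p)^2 \<partial>restrict_space lborel (Omega L1 L2)) \<longlonglongrightarrow> 0"
proof -
  let ?M = "restrict_space lborel (Omega L1 L2)"
  define A where "A n = (\<integral>p. (\<phi> n p - f p)^2 \<partial>?M)" for n
  define B where "B n = (\<integral>p. (px (\<phi> n) p - gx p)^2 \<partial>?M)" for n
  define C where "C n = (\<integral>p. (py (\<phi> n) p - gy p)^2 \<partial>?M)" for n
  have eq: "H1_dist (Omega L1 L2) f gx gy (\<phi> n) = A n + B n + C n" for n
    unfolding H1_dist_def set_to_M A_def B_def C_def by (simp add: power2_commute)
  have nn: "0 \<le> A n" "0 \<le> B n" "0 \<le> C n" for n unfolding A_def B_def C_def by simp_all
  have S: "(\<lambda>n. A n + B n + C n) \<longlonglongrightarrow> 0" using assms unfolding eq .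
  have "A \<longlonglongrightarrow> 0" by (rule tendsto_sandwich[OF _ _ tendsto_const S]) (use nn in auto)
  moreover have "B \<longlonglongrightarrow> 0" by (rule tendsto_sandwich[OF _ _ tendsto_const S]) (use nn in auto)
  moreover have "C \<longlonglongrightarrow> 0" by (rule tendsto_sandwich[OF _ _ tendsto_const S]) (use nn in auto)
  ultimately show "(\<lambda>n. \<integral>p. (\<phi> n p - f p)^2 \<partial>?M) \<longlonglongrightarrow> 0"
    "(\<lambda>n. \<integral>p. (px (\<phi> n) p - gx p)^2 \<partial>?M) \<longlonglongrightarrow> 0"
    "(\<lambda>n. \<integral>p. (py (\<phi> n) p - gy p)^2 \<partial>?M) \<longlonglongrightarrow> 0"
    unfolding A_def B_def C_def by auto
qed



theorem theorem4p2:
  fixes L1 L2 \<alpha>1 \<alpha>2 \<beta>1 \<beta>2 :: real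
    and \<theta>1 \<theta>1x \<theta>1y \<theta>2 \<theta>2x \<theta>2y :: "real \<times> real \<Rightarrow> real"
  assumes "L1 > 0" and "L2 > 0" and "\<alpha>1 > 0" and "\<alpha>2 > 0"
    and "\<alpha>2 * \<beta>1 - \<alpha>1 * \<beta>2 \<noteq> 0"
    and "L2_on (Omega L1 L2) \<theta>1" and "L2_on (Omega L1 L2) \<theta>1x" and "L2_on (Omega L1 L2) \<theta>1y"
    and "L2_on (Omega L1 L2) \<theta>2" and "L2_on (Omega L1 L2) \<theta>2x" and "L2_on (Omega L1 L2) \<theta>2y"
    and "weak_dx (Omega L1 L2) \<theta>1 \<theta>1x" and "weak_dy (Omega L1 L2) \<theta>1 \<theta>1y"
    and "weak_dx (Omega L1 L2) \<theta>2 \<theta>2x" and "weak_dy (Omega L1 L2) \<theta>2 \<theta>2y"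
    and "zero_trace (Omega L1 L2) \<theta>1 \<theta>1x \<theta>1y (\<lambda>y. (0, y)) 0 L2"
    and "zero_trace (Omega L1 L2) \<theta>1 \<theta>1x \<theta>1y (\<lambda>x. (x, 0)) 0 L1"
    and "zero_trace (Omega L1 L2) \<theta>2 \<theta>2x \<theta>2y (\<lambda>y. (L1, y)) 0 L2"
    and "zero_trace (Omega L1 L2) \<theta>2 \<theta>2x \<theta>2y (\<lambda>x. (x, L2)) 0 L1"
  shows "(LINT p:Omega L1 L2|lborel.
            (\<alpha>1 * \<theta>1x p + \<beta>1 * \<theta>2x p + \<alpha>2 * \<theta>1y p + \<beta>2 * \<theta>2y p) * \<theta>1 p
          + (\<beta>1 * \<theta>1x p - \<alpha>1 * \<theta>2x p + \<beta>2 * \<theta>1y p - \<alpha>2 * \<theta>2y p) * \<theta>2 p) \<ge> 0"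
proof -
  let ?O = "Omega L1 L2"
  let ?M = "restrict_space lborel (Omega L1 L2)"
  obtain a where a1: "\<And>n. C1_fun (a n)" and a2: "(\<lambda>n. H1_dist ?O \<theta>1 \<theta>1x \<theta>1y (a n)) \<longlonglongrightarrow> 0"
      and a3: "(\<lambda>n. integral {0..L2} (\<lambda>s. (a n (0, s))^2)) \<longlonglongrightarrow> 0"
    using assms(16) unfolding zero_trace_def by auto
  obtain b where b1: "\<And>n. C1_fun (b n)" and b2: "(\<lambda>n. H1_dist ?O \<theta>1 \<theta>1x \<theta>1y (b n)) \<longlonglongrightarrow> 0"
      and b3: "(\<lambda>n. integral {0..L1} (\<lambda>s. (b n (s, 0))^2)) \<longlonglongrightarrow> 0"
    using assms(17) unfolding zero_trace_def by auto
  obtain c where c1: "\<And>n. C1_fun (c n)" and c2: "(\<lambda>n. H1_dist ?O \<theta>2 \<theta>2x \<theta>2y (c n)) \<longlonglongrightarrow> 0"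
      and c3: "(\<lambda>n. integral {0..L2} (\<lambda>s. (c n (L1, s))^2)) \<longlonglongrightarrow> 0"
    using assms(18) unfolding zero_trace_def by auto
  obtain d where d1: "\<And>n. C1_fun (d n)" and d2: "(\<lambda>n. H1_dist ?O \<theta>2 \<theta>2x \<theta>2y (d n)) \<longlonglongrightarrow> 0"
      and d3: "(\<lambda>n. integral {0..L1} (\<lambda>s. (d n (s, L2))^2)) \<longlonglongrightarrow> 0"
    using assms(19) unfolding zero_trace_def by auto
  have La: "L2conv ?M a \<theta>1" unfolding L2conv_def
    using C1_M[OF a1] L2_on_M[OF assms(6)] H1_split(1)[OF a2] by auto
  have Lax: "L2conv ?M (\<lambda>n. px (a n)) \<theta>1x" unfolding L2conv_def
    using C1_M[OF a1] L2_on_M[OF assms(7)] H1_split(2)[OF a2] by auto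
  have Lb: "L2conv ?M b \<theta>1" unfolding L2conv_def
    using C1_M[OF b1] L2_on_M[OF assms(6)] H1_split(1)[OF b2] by auto
  have Lby: "L2conv ?M (\<lambda>n. py (b n)) \<theta>1y" unfolding L2conv_def
    using C1_M[OF b1] L2_on_M[OF assms(8)] H1_split(3)[OF b2] by auto
  have Lc: "L2conv ?M c \<theta>2" unfolding L2conv_def
    using C1_M[OF c1] L2_on_M[OF assms(9)] H1_split(1)[OF c2] by auto
  have Lcx: "L2conv ?M (\<lambda>n. px (c n)) \<theta>2x" unfolding L2conv_def
    using C1_M[OF c1] L2_on_M[OF assms(10)] H1_split(2)[OF c2] by auto
  have Ld: "L2conv ?M d \<theta>2" unfolding L2conv_def
    using C1_M[OF d1] L2_on_M[OF assms(9)] H1_split(1)[OF d2] by auto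
  have Ldy: "L2conv ?M (\<lambda>n. py (d n)) \<theta>2y" unfolding L2conv_def
    using C1_M[OF d1] L2_on_M[OF assms(11)] H1_split(3)[OF d2] by auto
  define Q1 where "Q1 = (\<lambda>p. \<alpha>1 * \<theta>1x p * \<theta>1 p + \<beta>1 * \<theta>2x p * \<theta>1 p + \<beta>1 * \<theta>1x p * \<theta>2 p - \<alpha>1 * \<theta>2x p * \<theta>2 p)"
  define Q2 where "Q2 = (\<lambda>p. \<alpha>2 * \<theta>1y p * \<theta>1 p + \<beta>2 * \<theta>2y p * \<theta>1 p + \<beta>2 * \<theta>1y p * \<theta>2 p - \<alpha>2 * \<theta>2y p * \<theta>2 p)"
  have iQ1: "integrable ?M Q1" unfolding Q1_def
    by (rule Q_eq(2)) (use L2conv_int[OF La Lax] L2conv_int[OF La Lcx] L2conv_int[OF Lc Lax] L2conv_int[OF Lc Lcx] in auto)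
  have iQ2: "integrable ?M Q2" unfolding Q2_def
    by (rule Q_eq(2)) (use L2conv_int[OF Lb Lby] L2conv_int[OF Lb Ldy] L2conv_int[OF Ld Lby] L2conv_int[OF Ld Ldy] in auto)
  have T1: "(\<lambda>n. \<integral>p. \<alpha>1 * px (a n) p * a n p + \<beta>1 * px (c n) p * a n p + \<beta>1 * px (a n) p * c n p - \<alpha>1 * px (c n) p * c n p \<partial>?M)
      \<longlonglongrightarrow> integral\<^sup>L ?M Q1"
    unfolding Q1_def by (rule Q_tendsto[OF La Lax Lc Lcx])
  have T2: "(\<lambda>n. \<integral>p. \<alpha>2 * py (b n) p * b n p + \<beta>2 * py (d n) p * b n p + \<beta>2 * py (b n) p * d n p - \<alpha>2 * py (d n) p * d n p \<partial>?M)
      \<longlonglongrightarrow> integral\<^sup>L ?M Q2"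
    unfolding Q2_def by (rule Q_tendsto[OF Lb Lby Ld Ldy])
  have B1: "(\<lambda>n. -(\<beta>1^2/(2 * \<alpha>1) + \<alpha>1/2) * (integral {0..L2} (\<lambda>s. (c n (L1, s))^2) + integral {0..L2} (\<lambda>s. (a n (0, s))^2)))
      \<longlonglongrightarrow> -(\<beta>1^2/(2 * \<alpha>1) + \<alpha>1/2) * (0 + 0)"
    by (intro tendsto_intros c3 a3)
  have B2: "(\<lambda>n. -(\<beta>2^2/(2 * \<alpha>2) + \<alpha>2/2) * (integral {0..L1} (\<lambda>s. (d n (s, L2))^2) + integral {0..L1} (\<lambda>s. (b n (s, 0))^2)))
      \<longlonglongrightarrow> -(\<beta>2^2/(2 * \<alpha>2) + \<alpha>2/2) * (0 + 0)"
    by (intro tendsto_intros d3 b3)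
  have P1: "-(\<beta>1^2/(2 * \<alpha>1) + \<alpha>1/2) * (0 + 0) \<le> integral\<^sup>L ?M Q1"
    by (rule LIMSEQ_le[OF B1 T1]) (use green_x[OF assms(1,2,3) a1 c1] in auto)
  have P2: "-(\<beta>2^2/(2 * \<alpha>2) + \<alpha>2/2) * (0 + 0) \<le> integral\<^sup>L ?M Q2"
    by (rule LIMSEQ_le[OF B2 T2]) (use green_y[OF assms(1,2,4) b1 d1] in auto)
  have "(LINT p:Omega L1 L2|lborel.
            (\<alpha>1 * \<theta>1x p + \<beta>1 * \<theta>2x p + \<alpha>2 * \<theta>1y p + \<beta>2 * \<theta>2y p) * \<theta>1 p
          + (\<beta>1 * \<theta>1x p - \<alpha>1 * \<theta>2x p + \<beta>2 * \<theta>1y p - \<alpha>2 * \<theta>2y p) * \<theta>2 p)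
      = (\<integral>p. Q1 p + Q2 p \<partial>?M)"
    unfolding set_to_M Q1_def Q2_def
    by (rule Bochner_Integration.integral_cong) (auto simp: algebra_simps)
  also have "\<dots> = integral\<^sup>L ?M Q1 + integral\<^sup>L ?M Q2"
    using iQ1 iQ2 by simp
  finally show ?thesis using P1 P2 by simp
qed


end
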